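(* Let $M\in\mathbb{R}^{d\times d}$ be symmetric, let $f:\mathbb{R}^d\to\mathbb{R}$ be differentiable and $M$-matrix-smooth, and let $\bar z$ be a stationary point of $f$. Let $s$ be standardized on $\mathbb{R}^d$ with $\mathbb{E}[\mathsf{u}_i^4]=\kappa<\infty$, and for $w=(m,C)$ let $\mathsf{g}=\nabla_w f(T_w(\mathsf{u}))$ with $\mathsf{u}\sim s$. Then \[ \mathbb{E}\|\mathsf{g}\|_2^2\le (d+1)\|M(m-\bar z)\|_2^2+(d+\kappa)\|MC\|_F^2 . \] Moreover, the bound is unimprovable: for every symmetric $M$ and every $\bar z$, the function $f(z)=\frac12(z-\bar z)^\top M(z-\bar z)$ satisfies the hypotheses and attains equality for every $w=(m,C)$.
   Context: For a symmetric matrix $M$, $f$ is $M$-matrix-smooth if $\|\nabla f(y)-\nabla f(z)\|_2\le\|M(y-z)\|_2$ for all $y,z\in\mathbb{R}^d$. $T_w(u)=Cu+m$ for $w=(m,C)$, $m\in\mathbb{R}^d$, $C\in\mathbb{R}^{d\times d}$, with $w$ regarded as the vector of all $d+d^2$ entries; $\nabla_w$ is the gradient with respect to all these entries and its norm is the Euclidean norm over all entries. A distribution $s$ on $\mathbb{R}^d$ is standardized if for $\mathsf{u}\sim s$ the components are i.i.d. with $\mathbb{E}\mathsf{u}_1=\mathbb{E}\mathsf{u}_1^3=0$ and $\mathrm{Var}(\mathsf{u}_1)=1$. $\|\cdot\|_F$ is the Frobenius norm. *)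

theory Defs
  imports "HOL-Analysis.Analysis" "HOL-Probability.Probability"
begin

text \<open>Gradient of a real-valued function on a Euclidean space, taken coordinatewise
  with respect to the standard basis (for \<open>real^'n\<close> these are the d entries,
  for \<open>real^'n \<times> real^'n^'n\<close> these are all d + d^2 entries of w = (m,C)).\<close>
definition grad :: "('a::euclidean_space \<Rightarrow> real) \<Rightarrow> 'a \<Rightarrow> 'a" where
  "grad F x = (\<Sum>b\<in>Basis. frechet_derivative F (at x) b *\<^sub>R b)"

definition sym_mat :: "real^'n^'n \<Rightarrow> bool" where
  "sym_mat M \<longleftrightarrow> transpose M = M"

definition matrix_smooth :: "real^'n^'n \<Rightarrow> (real^'n \<Rightarrow> real) \<Rightarrow> bool" where
  "matrix_smooth M f \<longleftrightarrow> (\<forall>y z. norm (grad f y - grad f z) \<le> norm (M *v (y - z)))"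

definition Tw :: "(real^'n) \<times> (real^'n^'n) \<Rightarrow> real^'n \<Rightarrow> real^'n" where
  "Tw w u = snd w *v u + fst w"

definition grad_w :: "(real^'n \<Rightarrow> real) \<Rightarrow> real^'n \<Rightarrow> (real^'n) \<times> (real^'n^'n) \<Rightarrow> (real^'n) \<times> (real^'n^'n)" where
  "grad_w f u w = grad (\<lambda>v. f (Tw v u)) w"

definition frob_norm :: "real^'n^'n \<Rightarrow> real" where
  "frob_norm A = sqrt (\<Sum>i\<in>UNIV. \<Sum>j\<in>UNIV. (A $ i $ j)\<^sup>2)"

definition standardized :: "(real^'n) measure \<Rightarrow> bool" where
  "standardized s \<longleftrightarrow> prob_space s \<and> sets s = sets borel \<and>
     prob_space.indep_vars s (\<lambda>_. borel) (\<lambda>i u. u $ i) UNIV \<and>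
     (\<forall>i j. distr s borel (\<lambda>u. u $ i) = distr s borel (\<lambda>u. u $ j)) \<and>
     (\<forall>i. integrable s (\<lambda>u. u $ i) \<and> integrable s (\<lambda>u. (u $ i)^2) \<and> integrable s (\<lambda>u. (u $ i)^3) \<and>
          (\<integral>u. u $ i \<partial>s) = 0 \<and> (\<integral>u. (u $ i)^3 \<partial>s) = 0 \<and>
          prob_space.variance s (\<lambda>u. u $ i) = 1)"

definition fourth_moment :: "(real^'n) measure \<Rightarrow> real \<Rightarrow> bool" where
  "fourth_moment s \<kappa> \<longleftrightarrow> (\<forall>i. integrable s (\<lambda>u. (u $ i)^4) \<and> (\<integral>u. (u $ i)^4 \<partial>s) = \<kappa>)"

end

theory Submission
  imports Defs
begin


lemma grad_eq:
  assumes "(F has_derivative F') (at x)" "\<And>h. F' h = r \<bullet> h"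
  shows "grad F x = r"
proof -
  have "frechet_derivative F (at x) = F'" using frechet_derivative_at[OF assms(1)] by simp
  then have "grad F x = (\<Sum>b\<in>Basis. (r \<bullet> b) *\<^sub>R b)" unfolding grad_def using assms(2)
    by simp
  then show ?thesis by (simp add: euclidean_representation)
qed

lemma linear_repr:
  fixes L :: "'a::euclidean_space \<Rightarrow> real"
  assumes "linear L"
  shows "L h = (\<Sum>b\<in>Basis. L b *\<^sub>R b) \<bullet> h"
proof -
  have "L h = L (\<Sum>b\<in>Basis. (h \<bullet> b) *\<^sub>R b)" by (simp add: euclidean_representation)
  also have "\<dots> = (\<Sum>b\<in>Basis. (h \<bullet> b) * L b)"
    using assms by (simp add: linear_sum linear_scale)
  also have "\<dots> = (\<Sum>b\<in>Basis. L b *\<^sub>R b) \<bullet> h"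
    unfolding inner_sum_left by (simp add: mult.commute inner_commute)
  finally show ?thesis .
qed

lemma grad_repr:
  assumes "F differentiable (at x)"
  shows "frechet_derivative F (at x) h = grad F x \<bullet> h"
proof -
  have "(F has_derivative frechet_derivative F (at x)) (at x)"
    using assms frechet_derivative_works by blast
  then have "linear (frechet_derivative F (at x))"
    using has_derivative_linear by blast
  then show ?thesis unfolding grad_def by (rule linear_repr)
qed

lemma Tw_linear: "linear (\<lambda>v::(real^'n) \<times> (real^'n^'n). Tw v u)"
  unfolding Tw_def
  by (rule linearI) (auto simp: matrix_vector_mult_def vec_eq_iff sum.distrib algebra_simps sum_distrib_left)

lemma grad_w_formula:
  fixes f :: "real^'n \<Rightarrow> real"
  assumes "\<forall>y. f differentiable (at y)"
  shows "grad_w f u w = (grad f (Tw w u), \<chi> i j. grad f (Tw w u) $ i * u $ j)"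
proof -
  let ?z = "Tw w u"
  let ?g = "grad f ?z"
  have df: "(f has_derivative frechet_derivative f (at ?z)) (at ?z)"
    using assms frechet_derivative_works by blast
  have dT: "((\<lambda>v. Tw v u) has_derivative (\<lambda>v. Tw v u)) (at w)"
    using Tw_linear bounded_linear_imp_has_derivative linear_conv_bounded_linear by blast
  have dF: "((\<lambda>v. f (Tw v u)) has_derivative (\<lambda>v. frechet_derivative f (at ?z) (Tw v u))) (at w)"
    using diff_chain_at[OF dT df] by (simp add: o_def)
  show ?thesis unfolding grad_w_def
  proof (rule grad_eq[OF dF])
    fix h :: "(real^'n) \<times> (real^'n^'n)"
    obtain dm dC where h: "h = (dm, dC)" by (cases h)
    have "frechet_derivative f (at ?z) (Tw h u) = ?g \<bullet> (dC *v u + dm)"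
      using grad_repr[of f ?z "Tw h u"] assms h by (simp add: Tw_def)
    also have "\<dots> = ?g \<bullet> dm + (\<chi> i j. ?g $ i * u $ j) \<bullet> dC"
      by (simp add: inner_add_right inner_vec_def matrix_vector_mult_def sum_distrib_left
          algebra_simps sum.distrib)
    finally show "frechet_derivative f (at ?z) (Tw h u) = (?g, \<chi> i j. ?g $ i * u $ j) \<bullet> h"
      using h by (simp add: inner_Pair)
  qed
qed

lemma norm_sq_vec2: "(norm (x::('a::real_inner)^'n))\<^sup>2 = (\<Sum>i\<in>UNIV. (norm (x $ i))\<^sup>2)"
  by (simp only: power2_norm_eq_inner inner_vec_def)

lemma norm_sq_vec: "(norm (x::real^'n))\<^sup>2 = (\<Sum>i\<in>UNIV. (x $ i)\<^sup>2)"
  by (simp add: norm_sq_vec2)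

lemma norm_grad_w:
  fixes g u :: "real^'n"
  shows "(norm (g, \<chi> i j. g $ i * u $ j))\<^sup>2 = (norm g)\<^sup>2 * (1 + (norm u)\<^sup>2)"
proof -
  have "(norm (\<chi> i j. g $ i * u $ j))\<^sup>2 = (norm g)\<^sup>2 * (norm u)\<^sup>2"
    by (simp add: norm_sq_vec2 norm_sq_vec power_mult_distrib sum_product)
  then show ?thesis by (simp add: norm_Pair algebra_simps)
qed



lemma sym_inner:
  assumes "sym_mat (M::real^'n^'n)"
  shows "x \<bullet> (M *v y) = (M *v x) \<bullet> y"
proof -
  have Mij: "\<And>i j. M $ i $ j = M $ j $ i"
    using assms unfolding sym_mat_def transpose_def by (metis vec_lambda_beta)
  have "x \<bullet> (M *v y) = (\<Sum>i\<in>UNIV. \<Sum>j\<in>UNIV. x $ i * M $ i $ j * y $ j)"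
    by (simp add: inner_vec_def matrix_vector_mult_def sum_distrib_left mult.assoc)
  also have "\<dots> = (\<Sum>j\<in>UNIV. \<Sum>i\<in>UNIV. x $ i * M $ i $ j * y $ j)"
    by (rule sum.swap)
  also have "\<dots> = (\<Sum>j\<in>UNIV. y $ j * (\<Sum>i\<in>UNIV. M $ j $ i * x $ i))"
    by (simp add: sum_distrib_left Mij[of _ j for j] mult.commute mult.left_commute)
  also have "\<dots> = (M *v x) \<bullet> y"
    by (simp add: inner_vec_def matrix_vector_mult_def mult.commute)
  finally show ?thesis .
qed

lemma q_deriv:
  assumes "sym_mat (M::real^'n^'n)"
  shows "((\<lambda>z. (1/2) * ((z - z0) \<bullet> (M *v (z - z0)))) has_derivative (\<lambda>h. (M *v (z - z0)) \<bullet> h)) (at z)"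
proof -
  have d1: "((\<lambda>z. z - z0) has_derivative (\<lambda>h. h)) (at z)"
    by (auto intro!: derivative_eq_intros)
  have d2: "((\<lambda>z. M *v (z - z0)) has_derivative (\<lambda>h. M *v h)) (at z)"
    using bounded_linear.has_derivative[OF matrix_vector_mul_bounded_linear d1] .
  note d3 = has_derivative_mult_right[OF has_derivative_inner[OF d1 d2], of "1/2"]
  show ?thesis
    apply (rule has_derivative_eq_rhs[OF d3])
    using sym_inner[OF assms, of _ "z - z0", symmetric] by (auto simp: inner_commute field_simps)
qed

lemma q_grad:
  assumes "sym_mat (M::real^'n^'n)"
  shows "grad (\<lambda>z. (1/2) * ((z - z0) \<bullet> (M *v (z - z0)))) z = M *v (z - z0)"
  by (rule grad_eq[OF q_deriv[OF assms]]) simp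



definition mu :: "real \<Rightarrow> nat \<Rightarrow> real" where
  "mu \<kappa> n = (if n = 0 \<or> n = 2 then 1 else if n = 4 then \<kappa> else 0)"

lemma single_moment:
  fixes s :: "(real^'n) measure"
  assumes st: "standardized s" and fm: "fourth_moment s \<kappa>" and n: "n \<le> 4"
  shows "integrable s (\<lambda>u. (u $ i)^n) \<and> (\<integral>u. (u $ i)^n \<partial>s) = mu \<kappa> n"
proof -
  have ps: "prob_space s" using st by (simp add: standardized_def)
  have i1: "integrable s (\<lambda>u. u $ i)" and i2: "integrable s (\<lambda>u. (u $ i)^2)"
    and i3: "integrable s (\<lambda>u. (u $ i)^3)" and e1: "(\<integral>u. u $ i \<partial>s) = 0"
    and e3: "(\<integral>u. (u $ i)^3 \<partial>s) = 0"
    using st by (auto simp: standardized_def)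
  have var: "prob_space.variance s (\<lambda>u. u $ i) = 1"
    using st unfolding standardized_def by blast
  have i4: "integrable s (\<lambda>u. (u $ i)^4)" and e4: "(\<integral>u. (u $ i)^4 \<partial>s) = \<kappa>"
    using fm by (auto simp: fourth_moment_def)
  have e2: "(\<integral>u. (u $ i)^2 \<partial>s) = 1" using var e1 by simp
  have "n = 0 \<or> n = 1 \<or> n = 2 \<or> n = 3 \<or> n = 4" using n by auto
  then show ?thesis
  proof (elim disjE)
    assume "n = 0"
    then show ?thesis using ps
      by (simp add: mu_def prob_space.prob_space finite_measure.integrable_const prob_space.finite_measure)
  qed (use i1 i2 i3 i4 e1 e2 e3 e4 in \<open>auto simp: mu_def\<close>)
qed

lemma prod_moment:
  fixes s :: "(real^'n) measure"
  assumes st: "standardized s" and fm: "fourth_moment s \<kappa>" and p: "\<And>i. p i \<le> 4"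
  shows "integrable s (\<lambda>u. \<Prod>i\<in>UNIV. (u $ i)^(p i)) \<and>
         (\<integral>u. (\<Prod>i\<in>UNIV. (u $ i)^(p i)) \<partial>s) = (\<Prod>i\<in>UNIV. mu \<kappa> (p i))"
proof -
  have ps: "prob_space s" using st by (simp add: standardized_def)
  have ind: "prob_space.indep_vars s (\<lambda>_. borel) (\<lambda>i u. u $ i) UNIV"
    using st by (simp add: standardized_def)
  have ind2: "prob_space.indep_vars s (\<lambda>_. borel) (\<lambda>i u. (u $ i)^(p i)) UNIV"
    using prob_space.indep_vars_compose2[OF ps ind, of "\<lambda>i x. x^(p i)" "\<lambda>_. borel"] by simp
  have int: "\<And>i. integrable s (\<lambda>u. (u $ i)^(p i))" using single_moment[OF st fm p] by blast
  show ?thesis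
    using prob_space.indep_vars_lebesgue_integral[OF ps finite_class.finite_UNIV ind2 int]
      prob_space.indep_vars_integrable[OF ps finite_class.finite_UNIV ind2 int]
      single_moment[OF st fm p] by simp
qed

lemma prod_delta_pow:
  fixes f :: "'a::finite \<Rightarrow> real"
  shows "(\<Prod>i\<in>UNIV. f i ^ (if i = j then a else 0)) = f j ^ a"
proof -
  have e: "(\<lambda>i. f i ^ (if i = j then a else 0)) = (\<lambda>i. if i = j then f j ^ a else 1)" by auto
  show ?thesis by (subst e) simp
qed

lemma mono3:
  fixes s :: "(real^'n) measure"
  assumes st: "standardized s" and fm: "fourth_moment s \<kappa>" and abc: "a + b + c \<le> 4"
  shows "integrable s (\<lambda>u. (u $ j)^a * (u $ l)^b * (u $ k)^c) \<and>
     (\<integral>u. (u $ j)^a * (u $ l)^b * (u $ k)^c \<partial>s) =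
     (\<Prod>i\<in>{j,l,k}. mu \<kappa> ((if i = j then a else 0) + (if i = l then b else 0) + (if i = k then c else 0)))"
proof -
  define p where "p i = (if i = j then a else 0) + (if i = l then b else 0) + (if i = k then c else 0)" for i
  have p4: "\<And>i. p i \<le> 4" using abc by (auto simp: p_def)
  have eq: "(\<lambda>u::real^'n. \<Prod>i\<in>UNIV. (u $ i)^(p i)) = (\<lambda>u. (u $ j)^a * (u $ l)^b * (u $ k)^c)"
  proof (rule ext)
    fix u :: "real^'n"
    show "(\<Prod>i\<in>UNIV. (u $ i)^(p i)) = (u $ j)^a * (u $ l)^b * (u $ k)^c"
      unfolding p_def power_add prod.distrib
      using prod_delta_pow[of "vec_nth u" j a] prod_delta_pow[of "vec_nth u" l b] prod_delta_pow[of "vec_nth u" k c]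
      by simp
  qed
  have pe: "(\<Prod>i\<in>UNIV. mu \<kappa> (p i)) = (\<Prod>i\<in>{j,l,k}. mu \<kappa> (p i))"
    by (rule prod.mono_neutral_right) (auto simp: p_def mu_def)
  have pm: "integrable s (\<lambda>u. \<Prod>i\<in>UNIV. (u $ i)^(p i)) \<and>
         (\<integral>u. (\<Prod>i\<in>UNIV. (u $ i)^(p i)) \<partial>s) = (\<Prod>i\<in>UNIV. mu \<kappa> (p i))"
    by (rule prod_moment[OF st fm p4])
  have "integrable s (\<lambda>u. (u $ j)^a * (u $ l)^b * (u $ k)^c) \<and>
     (\<integral>u. (u $ j)^a * (u $ l)^b * (u $ k)^c \<partial>s) = (\<Prod>i\<in>{j,l,k}. mu \<kappa> (p i))"
    using pm unfolding eq pe .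
  then show ?thesis by (simp only: p_def)
qed

lemma E_lin:
  fixes s :: "(real^'n) measure"
  assumes st: "standardized s" and fm: "fourth_moment s \<kappa>"
  shows "integrable s (\<lambda>u. u $ j * u $ l) \<and>
         (\<integral>u. u $ j * u $ l \<partial>s) = (if j = l then 1 else 0)"
  using mono3[OF st fm, of 1 1 0 j l j] by (cases "j = l") (auto simp: mu_def)

lemma E_k2:
  fixes s :: "(real^'n) measure"
  assumes st: "standardized s" and fm: "fourth_moment s \<kappa>"
  shows "integrable s (\<lambda>u. (u $ k)^2) \<and> (\<integral>u. (u $ k)^2 \<partial>s) = 1"
  using single_moment[OF st fm, of 2 k] by (simp add: mu_def)

lemma E_jk2:
  fixes s :: "(real^'n) measure"
  assumes st: "standardized s" and fm: "fourth_moment s \<kappa>"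
  shows "integrable s (\<lambda>u. u $ j * (u $ k)^2) \<and> (\<integral>u. u $ j * (u $ k)^2 \<partial>s) = 0"
  using mono3[OF st fm, of 1 0 2 j j k] by (cases "j = k") (auto simp: mu_def)

lemma E_jlk2:
  fixes s :: "(real^'n) measure"
  assumes st: "standardized s" and fm: "fourth_moment s \<kappa>"
  shows "integrable s (\<lambda>u. u $ j * u $ l * (u $ k)^2) \<and>
    (\<integral>u. u $ j * u $ l * (u $ k)^2 \<partial>s) = (if j = l then (if j = k then \<kappa> else 1) else 0)"
  using mono3[OF st fm, of 1 1 2 j l k]
  by (cases "j = l"; cases "j = k"; cases "l = k") (auto simp: mu_def)



lemma quad_expand:
  fixes a u :: "real^'n" and B :: "real^'n^'n" and x :: real
  shows "(norm (a + B *v u))\<^sup>2 * x = (\<Sum>i\<in>UNIV. (a $ i)\<^sup>2 * x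
      + 2 * a $ i * (\<Sum>j\<in>UNIV. B $ i $ j * (u $ j * x))
      + (\<Sum>j\<in>UNIV. \<Sum>l\<in>UNIV. B $ i $ j * B $ i $ l * (u $ j * u $ l * x)))"
proof -
  have "(norm (a + B *v u))\<^sup>2 * x = (\<Sum>i\<in>UNIV. (a $ i + (\<Sum>j\<in>UNIV. B $ i $ j * u $ j))\<^sup>2 * x)"
    by (simp add: norm_sq_vec matrix_vector_mult_def sum_distrib_right)
  also have "\<dots> = (\<Sum>i\<in>UNIV. (a $ i)\<^sup>2 * x
      + 2 * a $ i * (\<Sum>j\<in>UNIV. B $ i $ j * (u $ j * x))
      + (\<Sum>j\<in>UNIV. \<Sum>l\<in>UNIV. B $ i $ j * B $ i $ l * (u $ j * u $ l * x)))"
  proof (rule sum.cong[OF refl])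
    fix i
    let ?S = "\<Sum>j\<in>UNIV. B $ i $ j * u $ j"
    have s2: "?S * ?S = (\<Sum>j\<in>UNIV. \<Sum>l\<in>UNIV. B $ i $ j * u $ j * (B $ i $ l * u $ l))"
      by (rule sum_product)
    have "(a $ i + ?S)\<^sup>2 * x = (a $ i)\<^sup>2 * x + 2 * a $ i * (?S * x) + (?S * ?S) * x"
      by (simp add: power2_eq_square algebra_simps)
    also have "\<dots> = (a $ i)\<^sup>2 * x
      + 2 * a $ i * (\<Sum>j\<in>UNIV. B $ i $ j * (u $ j * x))
      + (\<Sum>j\<in>UNIV. \<Sum>l\<in>UNIV. B $ i $ j * B $ i $ l * (u $ j * u $ l * x))"
      unfolding s2 by (simp add: sum_distrib_right sum_distrib_left mult.commute mult.left_commute)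
    finally show "(a $ i + ?S)\<^sup>2 * x = \<dots>" .
  qed
  finally show ?thesis .
qed

lemma quad_expect:
  fixes s :: "(real^'n) measure" and v :: "real^'n \<Rightarrow> real" and a :: "real^'n" and B :: "real^'n^'n"
  assumes iv: "integrable s v" and iuv: "\<And>j. integrable s (\<lambda>u. u $ j * v u)"
    and iuuv: "\<And>j l. integrable s (\<lambda>u. u $ j * u $ l * v u)"
    and ev: "(\<integral>u. v u \<partial>s) = c0" and euv: "\<And>j. (\<integral>u. u $ j * v u \<partial>s) = 0"
    and euuv: "\<And>j l. (\<integral>u. u $ j * u $ l * v u \<partial>s) = (if j = l then c j else 0)"
  shows "integrable s (\<lambda>u. (norm (a + B *v u))\<^sup>2 * v u) \<and>
    (\<integral>u. (norm (a + B *v u))\<^sup>2 * v u \<partial>s) = c0 * (norm a)\<^sup>2 + (\<Sum>i\<in>UNIV. \<Sum>j\<in>UNIV. (B $ i $ j)\<^sup>2 * c j)"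
proof -
  define F where "F i u = (a $ i)\<^sup>2 * v u
      + 2 * a $ i * (\<Sum>j\<in>UNIV. B $ i $ j * (u $ j * v u))
      + (\<Sum>j\<in>UNIV. \<Sum>l\<in>UNIV. B $ i $ j * B $ i $ l * (u $ j * u $ l * v u))" for i u
  have eq: "(\<lambda>u. (norm (a + B *v u))\<^sup>2 * v u) = (\<lambda>u. \<Sum>i\<in>UNIV. F i u)"
    unfolding F_def by (rule ext) (rule quad_expand)
  have i1: "\<And>i. integrable s (\<lambda>u. \<Sum>j\<in>UNIV. B $ i $ j * (u $ j * v u))"
    using iuv by (intro Bochner_Integration.integrable_sum) auto
  have i2: "\<And>i. integrable s (\<lambda>u. \<Sum>j\<in>UNIV. \<Sum>l\<in>UNIV. B $ i $ j * B $ i $ l * (u $ j * u $ l * v u))"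
    using iuuv by (intro Bochner_Integration.integrable_sum) auto
  have iF: "\<And>i. integrable s (F i)"
    unfolding F_def using iv i1 i2 by (intro Bochner_Integration.integrable_add) auto
  have e1: "\<And>i. (\<integral>u. (\<Sum>j\<in>UNIV. B $ i $ j * (u $ j * v u)) \<partial>s) = 0"
    using iuv euv by (subst Bochner_Integration.integral_sum) auto
  have e2: "\<And>i. (\<integral>u. (\<Sum>j\<in>UNIV. \<Sum>l\<in>UNIV. B $ i $ j * B $ i $ l * (u $ j * u $ l * v u)) \<partial>s)
      = (\<Sum>j\<in>UNIV. (B $ i $ j)\<^sup>2 * c j)"
  proof -
    fix i
    have "(\<integral>u. (\<Sum>j\<in>UNIV. \<Sum>l\<in>UNIV. B $ i $ j * B $ i $ l * (u $ j * u $ l * v u)) \<partial>s)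
       = (\<Sum>j\<in>UNIV. \<Sum>l\<in>UNIV. B $ i $ j * B $ i $ l * (if j = l then c j else 0))"
      using iuuv euuv
      by (simp add: Bochner_Integration.integral_sum Bochner_Integration.integrable_sum)
    also have "\<dots> = (\<Sum>j\<in>UNIV. (B $ i $ j)\<^sup>2 * c j)"
      by (simp add: power2_eq_square if_distrib[of "\<lambda>x. _ * x"] cong: if_cong)
    finally show "?thesis i" .
  qed
  have eF: "\<And>i. (\<integral>u. F i u \<partial>s) = (a $ i)\<^sup>2 * c0 + (\<Sum>j\<in>UNIV. (B $ i $ j)\<^sup>2 * c j)"
    unfolding F_def using iv i1 i2 ev e1 e2 by simp
  show ?thesis unfolding eq using iF
    by (simp add: Bochner_Integration.integral_sum eF sum.distrib norm_sq_vec sum_distrib_left mult.commute)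
qed



lemma sum_if_k: "(\<Sum>k\<in>(UNIV::'n::finite set). if j = k then \<kappa> else 1) = real CARD('n) + \<kappa> - 1"
proof -
  have "(\<Sum>k\<in>(UNIV::'n set). if j = k then \<kappa> else 1) = (\<Sum>k\<in>(UNIV::'n set). 1 + (if j = k then \<kappa> - 1 else 0))"
    by (rule sum.cong) auto
  also have "\<dots> = real CARD('n) + \<kappa> - 1" by (simp add: sum.distrib)
  finally show ?thesis .
qed

lemma main_integral:
  fixes s :: "(real^'n) measure" and a :: "real^'n" and B :: "real^'n^'n"
  assumes st: "standardized s" and fm: "fourth_moment s \<kappa>"
  shows "integrable s (\<lambda>u. (norm (a + B *v u))\<^sup>2 * (1 + (norm u)\<^sup>2)) \<and>
    (\<integral>u. (norm (a + B *v u))\<^sup>2 * (1 + (norm u)\<^sup>2) \<partial>s)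
      = (real CARD('n) + 1) * (norm a)\<^sup>2 + (real CARD('n) + \<kappa>) * (frob_norm B)\<^sup>2"
proof -
  have ps: "prob_space s" using st by (simp add: standardized_def)
  have Q1: "integrable s (\<lambda>u. (norm (a + B *v u))\<^sup>2 * 1) \<and>
    (\<integral>u. (norm (a + B *v u))\<^sup>2 * 1 \<partial>s) = 1 * (norm a)\<^sup>2 + (\<Sum>i\<in>UNIV. \<Sum>j\<in>UNIV. (B $ i $ j)\<^sup>2 * 1)"
  proof (rule quad_expect[where v = "\<lambda>_. 1"])
    show "integrable s (\<lambda>_. 1::real)" using ps by (simp add: prob_space.finite_measure finite_measure.integrable_const)
    show "(\<integral>u. 1 \<partial>s) = (1::real)" using prob_space.prob_space[OF ps] by (simp add: lebesgue_integral_const)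
    fix j l
    show "integrable s (\<lambda>u. u $ j * 1)" using single_moment[OF st fm, of 1 j] by simp
    show "(\<integral>u. u $ j * 1 \<partial>s) = 0" using single_moment[OF st fm, of 1 j] by (simp add: mu_def)
    show "integrable s (\<lambda>u. u $ j * u $ l * 1)" using E_lin[OF st fm, of j l] by simp
    show "(\<integral>u. u $ j * u $ l * 1 \<partial>s) = (if j = l then 1 else 0)" using E_lin[OF st fm, of j l] by simp
  qed
  have Q2: "integrable s (\<lambda>u. (norm (a + B *v u))\<^sup>2 * (u $ k)\<^sup>2) \<and>
    (\<integral>u. (norm (a + B *v u))\<^sup>2 * (u $ k)\<^sup>2 \<partial>s) = 1 * (norm a)\<^sup>2 +
       (\<Sum>i\<in>UNIV. \<Sum>j\<in>UNIV. (B $ i $ j)\<^sup>2 * (if j = k then \<kappa> else 1))" for k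
  proof (rule quad_expect[where v = "\<lambda>u. (u $ k)\<^sup>2"])
    show "integrable s (\<lambda>u. (u $ k)\<^sup>2)" using E_k2[OF st fm, of k] by simp
    show "(\<integral>u. (u $ k)\<^sup>2 \<partial>s) = 1" using E_k2[OF st fm, of k] by simp
    fix j l
    show "integrable s (\<lambda>u. u $ j * (u $ k)\<^sup>2)" using E_jk2[OF st fm, of j k] by simp
    show "(\<integral>u. u $ j * (u $ k)\<^sup>2 \<partial>s) = 0" using E_jk2[OF st fm, of j k] by simp
    show "integrable s (\<lambda>u. u $ j * u $ l * (u $ k)\<^sup>2)" using E_jlk2[OF st fm, of j l k] by simp
    show "(\<integral>u. u $ j * u $ l * (u $ k)\<^sup>2 \<partial>s) = (if j = l then (if j = k then \<kappa> else 1) else 0)"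
      using E_jlk2[OF st fm, of j l k] by simp
  qed
  have eq: "(\<lambda>u. (norm (a + B *v u))\<^sup>2 * (1 + (norm u)\<^sup>2)) =
     (\<lambda>u. (norm (a + B *v u))\<^sup>2 * 1 + (\<Sum>k\<in>UNIV. (norm (a + B *v u))\<^sup>2 * (u $ k)\<^sup>2))"
    by (rule ext) (simp only: norm_sq_vec[of u for u] distrib_left sum_distrib_left mult_1_right)
  have iS: "integrable s (\<lambda>u. \<Sum>k\<in>UNIV. (norm (a + B *v u))\<^sup>2 * (u $ k)\<^sup>2)"
    using Q2 by (intro Bochner_Integration.integrable_sum) auto
  have eS: "(\<integral>u. (\<Sum>k\<in>UNIV. (norm (a + B *v u))\<^sup>2 * (u $ k)\<^sup>2) \<partial>s)
      = (\<Sum>k\<in>UNIV. 1 * (norm a)\<^sup>2 + (\<Sum>i\<in>UNIV. \<Sum>j\<in>UNIV. (B $ i $ j)\<^sup>2 * (if j = k then \<kappa> else 1)))"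
    using Q2 by (simp add: Bochner_Integration.integral_sum)
  have eS2: "(\<Sum>k\<in>UNIV. 1 * (norm a)\<^sup>2 + (\<Sum>i\<in>UNIV. \<Sum>j\<in>UNIV. (B $ i $ j)\<^sup>2 * (if j = k then \<kappa> else 1)))
     = real CARD('n) * (norm a)\<^sup>2 + (\<Sum>i\<in>UNIV. \<Sum>j\<in>UNIV. (B $ i $ j)\<^sup>2) * (real CARD('n) + \<kappa> - 1)"
  proof -
    have "(\<Sum>k\<in>UNIV. \<Sum>i\<in>UNIV. \<Sum>j\<in>UNIV. (B $ i $ j)\<^sup>2 * (if j = k then \<kappa> else 1))
       = (\<Sum>i\<in>UNIV. \<Sum>k\<in>UNIV. \<Sum>j\<in>UNIV. (B $ i $ j)\<^sup>2 * (if j = k then \<kappa> else 1))"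
      by (rule sum.swap)
    also have "\<dots> = (\<Sum>i\<in>UNIV. \<Sum>j\<in>UNIV. \<Sum>k\<in>UNIV. (B $ i $ j)\<^sup>2 * (if j = k then \<kappa> else 1))"
      by (rule sum.cong[OF refl], rule sum.swap)
    also have "\<dots> = (\<Sum>i\<in>UNIV. \<Sum>j\<in>UNIV. (B $ i $ j)\<^sup>2 * (real CARD('n) + \<kappa> - 1))"
      by (simp add: sum_distrib_left[symmetric] sum_if_k)
    finally show ?thesis by (simp add: sum.distrib sum_distrib_right)
  qed
  have fr: "(frob_norm B)\<^sup>2 = (\<Sum>i\<in>UNIV. \<Sum>j\<in>UNIV. (B $ i $ j)\<^sup>2)"
    unfolding frob_norm_def by (simp add: sum_nonneg)
  let ?F = "\<Sum>i\<in>UNIV. \<Sum>j\<in>UNIV. (B $ i $ j)\<^sup>2"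
  have Q1': "integrable s (\<lambda>u. (norm (a + B *v u))\<^sup>2 * 1)"
    and Q1v: "(\<integral>u. (norm (a + B *v u))\<^sup>2 * 1 \<partial>s) = (norm a)\<^sup>2 + ?F"
    using Q1 by auto
  have int: "integrable s (\<lambda>u. (norm (a + B *v u))\<^sup>2 * 1 + (\<Sum>k\<in>UNIV. (norm (a + B *v u))\<^sup>2 * (u $ k)\<^sup>2))"
    using Q1' iS by (rule Bochner_Integration.integrable_add)
  have "(\<integral>u. (norm (a + B *v u))\<^sup>2 * 1 + (\<Sum>k\<in>UNIV. (norm (a + B *v u))\<^sup>2 * (u $ k)\<^sup>2) \<partial>s)
     = ((norm a)\<^sup>2 + ?F) + (real CARD('n) * (norm a)\<^sup>2 + ?F * (real CARD('n) + \<kappa> - 1))"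
    using Bochner_Integration.integral_add[OF Q1' iS] Q1v eS eS2 by simp
  also have "\<dots> = (real CARD('n) + 1) * (norm a)\<^sup>2 + (real CARD('n) + \<kappa>) * (frob_norm B)\<^sup>2"
    unfolding fr by (simp add: algebra_simps)
  finally show ?thesis unfolding eq using int by simp
qed



lemma vec_shift:
  fixes M C :: "real^'n^'n" and u m z :: "real^'n"
  shows "M *v (Tw (m, C) u - z) = M *v (m - z) + (M ** C) *v u"
proof -
  have "Tw (m, C) u - z = (m - z) + C *v u" by (simp add: Tw_def algebra_simps)
  then show ?thesis by (simp only: matrix_vector_right_distrib matrix_vector_mul_assoc)
qed

lemma nn_main:
  fixes s :: "(real^'n) measure" and a :: "real^'n" and B :: "real^'n^'n"
  assumes st: "standardized s" and fm: "fourth_moment s \<kappa>"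
  shows "(\<integral>\<^sup>+ u. ennreal ((norm (a + B *v u))\<^sup>2 * (1 + (norm u)\<^sup>2)) \<partial>s)
    = ennreal ((real CARD('n) + 1) * (norm a)\<^sup>2 + (real CARD('n) + \<kappa>) * (frob_norm B)\<^sup>2)"
  using main_integral[OF st fm, of a B]
  by (subst nn_integral_eq_integral) auto

theorem theorem2:
  fixes M :: "real^'n^'n" and f :: "real^'n \<Rightarrow> real" and zbar :: "real^'n"
    and s :: "(real^'n) measure" and \<kappa> :: real and m :: "real^'n" and C :: "real^'n^'n"
  assumes "sym_mat M"
    and "\<forall>y. f differentiable (at y)"
    and "matrix_smooth M f"
    and "grad f zbar = 0"
    and "standardized s"
    and "fourth_moment s \<kappa>"
  shows "(\<integral>\<^sup>+ u. ennreal ((norm (grad_w f u (m, C)))\<^sup>2) \<partial>s)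
           \<le> ennreal ((real CARD('n) + 1) * (norm (M *v (m - zbar)))\<^sup>2
                     + (real CARD('n) + \<kappa>) * (frob_norm (M ** C))\<^sup>2)
     \<and> (\<forall>(M' :: real^'n^'n) (z0 :: real^'n). sym_mat M' \<longrightarrow>
          (let q = (\<lambda>z. (1/2) * ((z - z0) \<bullet> (M' *v (z - z0)))) in
            (\<forall>y. q differentiable (at y)) \<and> matrix_smooth M' q \<and> grad q z0 = 0 \<and>
            (\<forall>(s' :: (real^'n) measure) \<kappa>' (m' :: real^'n) (C' :: real^'n^'n).
               standardized s' \<and> fourth_moment s' \<kappa>' \<longrightarrow>
               (\<integral>\<^sup>+ u. ennreal ((norm (grad_w q u (m', C')))\<^sup>2) \<partial>s')
                 = ennreal ((real CARD('n) + 1) * (norm (M' *v (m' - z0)))\<^sup>2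
                     + (real CARD('n) + \<kappa>') * (frob_norm (M' ** C'))\<^sup>2))))"
proof
  have pw: "(norm (grad_w f u (m, C)))\<^sup>2 \<le> (norm (M *v (m - zbar) + (M ** C) *v u))\<^sup>2 * (1 + (norm u)\<^sup>2)" for u
  proof -
    let ?z = "Tw (m, C) u"
    have "norm (grad f ?z) = norm (grad f ?z - grad f zbar)" using assms(4) by simp
    also have "\<dots> \<le> norm (M *v (?z - zbar))" using assms(3) unfolding matrix_smooth_def by blast
    finally have "norm (grad f ?z) \<le> norm (M *v (m - zbar) + (M ** C) *v u)" by (simp only: vec_shift)
    then have "(norm (grad f ?z))\<^sup>2 \<le> (norm (M *v (m - zbar) + (M ** C) *v u))\<^sup>2"
      by (intro power_mono) auto
    then show ?thesis
      unfolding grad_w_formula[OF assms(2)] norm_grad_w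
      by (intro mult_right_mono) auto
  qed
  have "(\<integral>\<^sup>+ u. ennreal ((norm (grad_w f u (m, C)))\<^sup>2) \<partial>s)
     \<le> (\<integral>\<^sup>+ u. ennreal ((norm (M *v (m - zbar) + (M ** C) *v u))\<^sup>2 * (1 + (norm u)\<^sup>2)) \<partial>s)"
    by (intro nn_integral_mono ennreal_leI pw)
  then show "(\<integral>\<^sup>+ u. ennreal ((norm (grad_w f u (m, C)))\<^sup>2) \<partial>s)
           \<le> ennreal ((real CARD('n) + 1) * (norm (M *v (m - zbar)))\<^sup>2
                     + (real CARD('n) + \<kappa>) * (frob_norm (M ** C))\<^sup>2)"
    unfolding nn_main[OF assms(5,6)] .
next
  show "\<forall>(M' :: real^'n^'n) (z0 :: real^'n). sym_mat M' \<longrightarrow>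
          (let q = (\<lambda>z. (1/2) * ((z - z0) \<bullet> (M' *v (z - z0)))) in
            (\<forall>y. q differentiable (at y)) \<and> matrix_smooth M' q \<and> grad q z0 = 0 \<and>
            (\<forall>(s' :: (real^'n) measure) \<kappa>' (m' :: real^'n) (C' :: real^'n^'n).
               standardized s' \<and> fourth_moment s' \<kappa>' \<longrightarrow>
               (\<integral>\<^sup>+ u. ennreal ((norm (grad_w q u (m', C')))\<^sup>2) \<partial>s')
                 = ennreal ((real CARD('n) + 1) * (norm (M' *v (m' - z0)))\<^sup>2
                     + (real CARD('n) + \<kappa>') * (frob_norm (M' ** C'))\<^sup>2)))"
  proof (intro allI impI)
    fix M' :: "real^'n^'n" and z0 :: "real^'n"
    assume sm: "sym_mat M'"
    define q where "q = (\<lambda>z::real^'n. (1/2) * ((z - z0) \<bullet> (M' *v (z - z0))))"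
    have gq: "grad q z = M' *v (z - z0)" for z unfolding q_def by (rule q_grad[OF sm])
    have dq: "\<forall>y. q differentiable (at y)"
      unfolding q_def using q_deriv[OF sm] by (blast intro: differentiableI)
    have ms: "matrix_smooth M' q"
      unfolding matrix_smooth_def gq by (simp add: matrix_vector_mult_diff_distrib[symmetric])
    have g0: "grad q z0 = 0" by (simp add: gq)
    have ig: "\<forall>(s' :: (real^'n) measure) \<kappa>' (m' :: real^'n) (C' :: real^'n^'n).
               standardized s' \<and> fourth_moment s' \<kappa>' \<longrightarrow>
               (\<integral>\<^sup>+ u. ennreal ((norm (grad_w q u (m', C')))\<^sup>2) \<partial>s')
                 = ennreal ((real CARD('n) + 1) * (norm (M' *v (m' - z0)))\<^sup>2
                     + (real CARD('n) + \<kappa>') * (frob_norm (M' ** C'))\<^sup>2)"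
    proof (intro allI impI, elim conjE)
      fix s' :: "(real^'n) measure" and \<kappa>' m' C'
      assume st: "standardized s'" and fm: "fourth_moment s' \<kappa>'"
      have pw: "(norm (grad_w q u (m', C')))\<^sup>2 = (norm (M' *v (m' - z0) + (M' ** C') *v u))\<^sup>2 * (1 + (norm u)\<^sup>2)" for u
        unfolding grad_w_formula[OF dq] norm_grad_w gq vec_shift ..
      show "(\<integral>\<^sup>+ u. ennreal ((norm (grad_w q u (m', C')))\<^sup>2) \<partial>s')
                 = ennreal ((real CARD('n) + 1) * (norm (M' *v (m' - z0)))\<^sup>2
                     + (real CARD('n) + \<kappa>') * (frob_norm (M' ** C'))\<^sup>2)"
        unfolding pw by (rule nn_main[OF st fm])
    qed
    show "let q = (\<lambda>z. (1/2) * ((z - z0) \<bullet> (M' *v (z - z0)))) in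
            (\<forall>y. q differentiable (at y)) \<and> matrix_smooth M' q \<and> grad q z0 = 0 \<and>
            (\<forall>(s' :: (real^'n) measure) \<kappa>' (m' :: real^'n) (C' :: real^'n^'n).
               standardized s' \<and> fourth_moment s' \<kappa>' \<longrightarrow>
               (\<integral>\<^sup>+ u. ennreal ((norm (grad_w q u (m', C')))\<^sup>2) \<partial>s')
                 = ennreal ((real CARD('n) + 1) * (norm (M' *v (m' - z0)))\<^sup>2
                     + (real CARD('n) + \<kappa>') * (frob_norm (M' ** C'))\<^sup>2))"
      unfolding Let_def q_def[symmetric] using dq ms g0 ig by blast
  qed
qed


end
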